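(* For each $n\in\mathbf{N}$, let $\mathcal{X}_n=\{1,\dots,n\}$, fix a chair preference $\succ$ (a ranking) on $\mathcal{X}_n$, and let $R^n$ (respectively $\mathrel{W}^n$) be a uniform random draw from the set of all rankings (respectively tournaments) on $\mathcal{X}_n$, with $R^n$ and $\mathrel{W}^n$ independent. Then $$\Pr\left(R^n \text{ is } \mathrel{W}^n\text{-unimprovable}\ \middle|\ R^n \text{ is } \mathrel{W}^n\text{-feasible}\right)\to 0\quad\text{as } n\to\infty.$$
   Context: A proto-ranking is an irreflexive transitive relation; a ranking is a total proto-ranking; a tournament is a total asymmetric relation on $\mathcal{X}_n$. Interaction: given a tournament $\mathrel{W}$, start from $R_0=\varnothing$; in each period with $R_{t-1}$ not total the chair offers a pair $\{x,y\}$ unranked by $R_{t-1}$, the winner is $x$ if $x\mathrel{W}y$ and $y$ otherwise, and $R_t$ is the transitive closure of $R_{t-1}\cup\{(\text{winner},\text{loser})\}$; stop when $R_t$ is total. A strategy assigns to each non-terminal history a pair unranked at it; its outcome under $\mathrel{W}$ is the final ranking. A ranking is $\mathrel{W}$-feasible if it is the outcome under $\mathrel{W}$ of some strategy. $R$ is more aligned with $\succ$ than $R'$ if for all $x\succ y$, $xR'y$ implies $xRy$; a ranking is $\mathrel{W}$-unimprovable if no other $\mathrel{W}$-feasible ranking is more aligned with $\succ$. *)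

theory Defs
  imports Complex_Main
begin

definition alts :: "nat \<Rightarrow> nat set" where
  "alts n = {1..n}"

definition total_rel :: "nat set \<Rightarrow> nat rel \<Rightarrow> bool" where
  "total_rel X R \<longleftrightarrow> (\<forall>x\<in>X. \<forall>y\<in>X. x \<noteq> y \<longrightarrow> (x, y) \<in> R \<or> (y, x) \<in> R)"

definition is_ranking :: "nat \<Rightarrow> nat rel \<Rightarrow> bool" where
  "is_ranking n R \<longleftrightarrow> R \<subseteq> alts n \<times> alts n \<and> irrefl R \<and> trans R \<and> total_rel (alts n) R"

definition is_tournament :: "nat \<Rightarrow> nat rel \<Rightarrow> bool" where
  "is_tournament n W \<longleftrightarrow> W \<subseteq> alts n \<times> alts n \<and> total_rel (alts n) W \<and>
     (\<forall>x y. (x, y) \<in> W \<longrightarrow> (y, x) \<notin> W)"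

text \<open>A history is the list of (winner, loser) outcomes so far; its induced proto-ranking is
  the transitive closure of these outcomes (starting from the empty relation).\<close>

definition hist_rel :: "(nat \<times> nat) list \<Rightarrow> nat rel" where
  "hist_rel h = (set h)\<^sup>+"

definition unranked :: "nat \<Rightarrow> nat rel \<Rightarrow> nat \<times> nat \<Rightarrow> bool" where
  "unranked n R p \<longleftrightarrow> fst p \<in> alts n \<and> snd p \<in> alts n \<and> fst p \<noteq> snd p \<and>
     p \<notin> R \<and> (snd p, fst p) \<notin> R"

definition is_strategy :: "nat \<Rightarrow> ((nat \<times> nat) list \<Rightarrow> nat \<times> nat) \<Rightarrow> bool" where
  "is_strategy n \<sigma> \<longleftrightarrow> (\<forall>h. set h \<subseteq> alts n \<times> alts n \<and> \<not> total_rel (alts n) (hist_rel h)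
       \<longrightarrow> unranked n (hist_rel h) (\<sigma> h))"

definition winner_loser :: "nat rel \<Rightarrow> nat \<times> nat \<Rightarrow> nat \<times> nat" where
  "winner_loser W p = (if p \<in> W then p else (snd p, fst p))"

primrec play :: "nat \<Rightarrow> ((nat \<times> nat) list \<Rightarrow> nat \<times> nat) \<Rightarrow> nat rel \<Rightarrow> nat \<Rightarrow> (nat \<times> nat) list" where
  "play n \<sigma> W 0 = []"
| "play n \<sigma> W (Suc t) =
     (if total_rel (alts n) (hist_rel (play n \<sigma> W t)) then play n \<sigma> W t
      else play n \<sigma> W t @ [winner_loser W (\<sigma> (play n \<sigma> W t))])"

definition is_outcome :: "nat \<Rightarrow> ((nat \<times> nat) list \<Rightarrow> nat \<times> nat) \<Rightarrow> nat rel \<Rightarrow> nat rel \<Rightarrow> bool" where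
  "is_outcome n \<sigma> W R \<longleftrightarrow> (\<exists>t. total_rel (alts n) (hist_rel (play n \<sigma> W t)) \<and>
       hist_rel (play n \<sigma> W t) = R)"

definition feasible :: "nat \<Rightarrow> nat rel \<Rightarrow> nat rel \<Rightarrow> bool" where
  "feasible n W R \<longleftrightarrow> is_ranking n R \<and> (\<exists>\<sigma>. is_strategy n \<sigma> \<and> is_outcome n \<sigma> W R)"

definition more_aligned :: "nat rel \<Rightarrow> nat rel \<Rightarrow> nat rel \<Rightarrow> bool" where
  "more_aligned P R R' \<longleftrightarrow> (\<forall>x y. (x, y) \<in> P \<longrightarrow> (x, y) \<in> R' \<longrightarrow> (x, y) \<in> R)"

definition unimprovable :: "nat \<Rightarrow> nat rel \<Rightarrow> nat rel \<Rightarrow> nat rel \<Rightarrow> bool" where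
  "unimprovable n P W R \<longleftrightarrow> is_ranking n R \<and>
     \<not> (\<exists>R'. feasible n W R' \<and> R' \<noteq> R \<and> more_aligned P R' R)"

end

theory Submission
  imports Defs
begin

fun rel_of :: "nat list \<Rightarrow> nat rel" where
  "rel_of [] = {}"
| "rel_of (x # xs) = {x} \<times> set xs \<union> rel_of xs"

lemma rel_of_nth: "(x, y) \<in> rel_of xs \<longleftrightarrow> (\<exists>i j. i < j \<and> j < length xs \<and> x = xs ! i \<and> y = xs ! j)"
proof (induction xs)
  case Nil
  then show ?case by simp
next
  case (Cons a xs)
  show ?case
  proof
    assume "(x, y) \<in> rel_of (a # xs)"
    then consider "x = a" "y \<in> set xs" | "(x, y) \<in> rel_of xs" by auto
    then show "\<exists>i j. i < j \<and> j < length (a # xs) \<and> x = (a # xs) ! i \<and> y = (a # xs) ! j"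
    proof cases
      case 1
      then obtain j where "j < length xs" "y = xs ! j" by (auto simp: in_set_conv_nth)
      then show ?thesis using 1 by (intro exI[of _ 0] exI[of _ "Suc j"]) auto
    next
      case 2
      then obtain i j where "i < j" "j < length xs" "x = xs ! i" "y = xs ! j" using Cons.IH by blast
      then show ?thesis by (intro exI[of _ "Suc i"] exI[of _ "Suc j"]) auto
    qed
  next
    assume "\<exists>i j. i < j \<and> j < length (a # xs) \<and> x = (a # xs) ! i \<and> y = (a # xs) ! j"
    then obtain i j where ij: "i < j" "j < length (a # xs)" "x = (a # xs) ! i" "y = (a # xs) ! j" by blast
    then obtain j' where j': "j = Suc j'" by (cases j) auto
    show "(x, y) \<in> rel_of (a # xs)"
    proof (cases i)
      case 0
      then show ?thesis using ij j' by auto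
    next
      case (Suc i')
      then have "(x, y) \<in> rel_of xs" using Cons.IH ij j' by auto
      then show ?thesis by simp
    qed
  qed
qed

lemma rel_of_iff:
  assumes "distinct xs" "i < length xs" "j < length xs"
  shows "(xs ! i, xs ! j) \<in> rel_of xs \<longleftrightarrow> i < j"
proof
  assume "(xs ! i, xs ! j) \<in> rel_of xs"
  then obtain i' j' where "i' < j'" "j' < length xs" "xs ! i = xs ! i'" "xs ! j = xs ! j'"
    unfolding rel_of_nth by blast
  then show "i < j" using assms by (simp add: nth_eq_iff_index_eq)
qed (use assms in \<open>auto simp: rel_of_nth\<close>)

lemma rel_of_sub: "rel_of xs \<subseteq> set xs \<times> set xs"
  by (induction xs) auto

lemma rel_of_irrefl: "distinct xs \<Longrightarrow> (x, x) \<notin> rel_of xs"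
  by (induction xs) (auto dest: rel_of_sub[THEN subsetD])

lemma rel_of_trans: "distinct xs \<Longrightarrow> trans (rel_of xs)"
  unfolding trans_def rel_of_nth
  by (metis nth_eq_iff_index_eq order.strict_trans order.strict_trans2)

lemma rel_of_asym: "distinct xs \<Longrightarrow> (x, y) \<in> rel_of xs \<Longrightarrow> (y, x) \<notin> rel_of xs"
  using rel_of_trans rel_of_irrefl unfolding trans_def by blast

lemma rel_of_total: "x \<in> set xs \<Longrightarrow> y \<in> set xs \<Longrightarrow> x \<noteq> y \<Longrightarrow> (x, y) \<in> rel_of xs \<or> (y, x) \<in> rel_of xs"
  by (induction xs) auto

lemma ranking_rel_of:
  assumes "distinct xs" "set xs = alts n"
  shows "is_ranking n (rel_of xs)"
  unfolding is_ranking_def total_rel_def irrefl_def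
  using assms rel_of_sub rel_of_irrefl rel_of_trans rel_of_total by blast

lemma rel_of_inj:
  "distinct xs \<Longrightarrow> distinct ys \<Longrightarrow> set xs = set ys \<Longrightarrow> rel_of xs = rel_of ys \<Longrightarrow> xs = ys"
proof (induction xs arbitrary: ys)
  case Nil
  then show ?case by simp
next
  case (Cons x xs)
  have "ys \<noteq> []" using Cons.prems(3) by auto
  then obtain y ys' where ys: "ys = y # ys'" by (meson neq_Nil_conv)
  have xy: "x = y"
  proof (rule ccontr)
    assume "x \<noteq> y"
    then have "(x, y) \<in> rel_of (x # xs)" "(y, x) \<in> rel_of (y # ys')"
      using Cons.prems(3) ys by auto
    then show False using rel_of_asym[OF Cons.prems(1)] Cons.prems(4) ys by blast
  qed
  have s: "set xs = set ys'" using Cons.prems ys xy by auto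
  have "rel_of xs = rel_of ys'"
  proof -
    have xn: "x \<notin> set xs" using Cons.prems(1) by simp
    have yn: "y \<notin> set ys'" using Cons.prems(2) ys by simp
    have "rel_of xs = rel_of (x # xs) \<inter> (set xs \<times> set xs)"
      using xn rel_of_sub[of xs] by auto
    also have "\<dots> = rel_of (y # ys') \<inter> (set ys' \<times> set ys')" using Cons.prems(4) ys s by simp
    also have "\<dots> = rel_of ys'" using yn rel_of_sub[of ys'] by auto
    finally show ?thesis .
  qed
  then show ?case using Cons ys xy s by simp
qed

definition adj :: "nat list \<Rightarrow> nat rel \<Rightarrow> bool" where
  "adj xs W \<longleftrightarrow> (\<forall>i. Suc i < length xs \<longrightarrow> (xs ! i, xs ! Suc i) \<in> W)"

definition cov :: "nat list \<Rightarrow> nat rel" where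
  "cov xs = {(xs ! i, xs ! Suc i) | i. Suc i < length xs}"

lemma cov_sub_rel_of: "cov xs \<subseteq> rel_of xs"
proof
  fix p assume "p \<in> cov xs"
  then obtain i where "Suc i < length xs" "p = (xs ! i, xs ! Suc i)" unfolding cov_def by blast
  then show "p \<in> rel_of xs" using rel_of_nth by (metis lessI)
qed

lemma rel_of_cov:
  assumes d: "distinct xs"
  shows "rel_of xs = (cov xs)\<^sup>+"
proof
  have step: "i < j \<longrightarrow> j < length xs \<longrightarrow> (xs ! i, xs ! j) \<in> (cov xs)\<^sup>+" for i j
  proof (induction j)
    case 0
    show ?case by simp
  next
    case (Suc j)
    show ?case
    proof (intro impI)
      assume a: "i < Suc j" "Suc j < length xs"
      have c: "(xs ! j, xs ! Suc j) \<in> cov xs" using a(2) unfolding cov_def by blast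
      show "(xs ! i, xs ! Suc j) \<in> (cov xs)\<^sup>+"
      proof (cases "i = j")
        case True
        then show ?thesis using c by auto
      next
        case False
        then have "(xs ! i, xs ! j) \<in> (cov xs)\<^sup>+" using Suc a by auto
        then show ?thesis using c by (rule trancl_into_trancl)
      qed
    qed
  qed
  show "rel_of xs \<subseteq> (cov xs)\<^sup>+"
  proof
    fix p assume "p \<in> rel_of xs"
    then obtain i j where "i < j" "j < length xs" "p = (xs ! i, xs ! j)"
      by (metis rel_of_nth surj_pair)
    then show "p \<in> (cov xs)\<^sup>+" using step by blast
  qed
next
  show "(cov xs)\<^sup>+ \<subseteq> rel_of xs"
    using trancl_id[OF rel_of_trans[OF d]] trancl_mono[OF _ cov_sub_rel_of] by blast
qed

lemma play_sub_W:
  assumes W: "is_tournament n W" and s: "is_strategy n \<sigma>"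
  shows "set (play n \<sigma> W t) \<subseteq> W"
proof (induction t)
  case 0
  show ?case by simp
next
  case (Suc t)
  let ?h = "play n \<sigma> W t"
  show ?case
  proof (cases "total_rel (alts n) (hist_rel ?h)")
    case True
    then show ?thesis using Suc by simp
  next
    case False
    have "set ?h \<subseteq> alts n \<times> alts n" using Suc W unfolding is_tournament_def by blast
    then have u: "unranked n (hist_rel ?h) (\<sigma> ?h)" using s False unfolding is_strategy_def by blast
    obtain a b where ab: "\<sigma> ?h = (a, b)" by fastforce
    have "winner_loser W (a, b) \<in> W"
      using u ab W unfolding unranked_def is_tournament_def total_rel_def winner_loser_def by auto
    then show ?thesis using Suc False ab by simp
  qed
qed

lemma feasible_adj:
  assumes W: "is_tournament n W" and d: "distinct xs" and f: "feasible n W (rel_of xs)"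
  shows "adj xs W"
proof -
  obtain \<sigma> t where s: "is_strategy n \<sigma>" and eq: "hist_rel (play n \<sigma> W t) = rel_of xs"
    using f unfolding feasible_def is_outcome_def by blast
  let ?S = "set (play n \<sigma> W t)"
  have SW: "?S \<subseteq> W" by (rule play_sub_W[OF W s])
  have eq': "?S\<^sup>+ = rel_of xs" using eq unfolding hist_rel_def .
  show ?thesis unfolding adj_def
  proof (intro allI impI)
    fix i assume i: "Suc i < length xs"
    have "(xs ! i, xs ! Suc i) \<in> ?S\<^sup>+" using eq' rel_of_iff[OF d] i by simp
    then show "(xs ! i, xs ! Suc i) \<in> W"
    proof (rule converse_tranclE)
      assume "(xs ! i, xs ! Suc i) \<in> ?S"
      then show ?thesis using SW by blast
    next
      fix y assume "(xs ! i, y) \<in> ?S" "(y, xs ! Suc i) \<in> ?S\<^sup>+"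
      then have r1: "(xs ! i, y) \<in> rel_of xs" and r2: "(y, xs ! Suc i) \<in> rel_of xs"
        using eq' by auto
      then have "y \<in> set xs" using rel_of_sub by blast
      then obtain p where p: "p < length xs" "y = xs ! p" by (auto simp: in_set_conv_nth)
      have "i < p" using r1 p rel_of_iff[OF d] i by simp
      moreover have "p < Suc i" using r2 p rel_of_iff[OF d] i by simp
      ultimately show ?thesis by simp
    qed
  qed
qed

lemma adj_feasible:
  assumes W: "is_tournament n W" and d: "distinct xs" and s: "set xs = alts n" and a: "adj xs W"
  shows "feasible n W (rel_of xs)"
proof -
  let ?C = "cov xs"
  let ?R = "rel_of xs"
  have CW: "?C \<subseteq> W" using a unfolding adj_def cov_def by blast
  have RC: "?R = ?C\<^sup>+" by (rule rel_of_cov[OF d])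
  have rk: "is_ranking n ?R" by (rule ranking_rel_of[OF d s])
  have finC: "finite ?C" using cov_sub_rel_of rel_of_sub
    by (metis List.finite_set finite_SigmaI finite_subset)
  have asy: "(x, y) \<in> ?R \<Longrightarrow> (y, x) \<notin> ?R" for x y using rel_of_asym[OF d] by blast
  have K: "\<exists>p\<in>?C. unranked n (hist_rel h) p"
    if hC: "set h \<subseteq> ?C" and nt: "\<not> total_rel (alts n) (hist_rel h)" for h
  proof (rule ccontr)
    assume na: "\<not> (\<exists>p\<in>?C. unranked n (hist_rel h) p)"
    have hR: "(set h)\<^sup>+ \<subseteq> ?R" using trancl_mono_subset[OF hC] RC by simp
    have "?C \<subseteq> (set h)\<^sup>+"
    proof
      fix p assume pC: "p \<in> ?C"
      then obtain i where i: "Suc i < length xs" "p = (xs ! i, xs ! Suc i)" unfolding cov_def by blast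
      have ne: "xs ! i \<noteq> xs ! Suc i" using d i by (simp add: nth_eq_iff_index_eq)
      have inal: "xs ! i \<in> alts n" "xs ! Suc i \<in> alts n" using i s by (auto simp flip: s)
      have pR: "p \<in> ?R" using pC cov_sub_rel_of by blast
      have "p \<in> (set h)\<^sup>+ \<or> (xs ! Suc i, xs ! i) \<in> (set h)\<^sup>+"
        using na pC ne inal i unfolding unranked_def hist_rel_def by auto
      then show "p \<in> (set h)\<^sup>+" using hR pR asy i by blast
    qed
    then have "?C\<^sup>+ \<subseteq> ((set h)\<^sup>+)\<^sup>+" by (rule trancl_mono_subset)
    then have "?R \<subseteq> (set h)\<^sup>+" using RC by (simp add: trans_trancl)
    then have "total_rel (alts n) (hist_rel h)"
      using rk unfolding is_ranking_def total_rel_def hist_rel_def by blast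
    then show False using nt by blast
  qed
  define \<sigma> where "\<sigma> h = (if \<exists>p\<in>?C. unranked n (hist_rel h) p
      then (SOME p. p \<in> ?C \<and> unranked n (hist_rel h) p)
      else (SOME p. unranked n (hist_rel h) p))" for h
  have strat: "is_strategy n \<sigma>"
    unfolding is_strategy_def
  proof (intro allI impI)
    fix h assume "set h \<subseteq> alts n \<times> alts n \<and> \<not> total_rel (alts n) (hist_rel h)"
    then have "\<not> total_rel (alts n) (hist_rel h)" by blast
    then obtain x y where "x \<in> alts n" "y \<in> alts n" "x \<noteq> y" "(x, y) \<notin> hist_rel h" "(y, x) \<notin> hist_rel h"
      unfolding total_rel_def by blast
    then have ex: "\<exists>p. unranked n (hist_rel h) p" unfolding unranked_def by (intro exI[of _ "(x, y)"]) auto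
    show "unranked n (hist_rel h) (\<sigma> h)"
    proof (cases "\<exists>p\<in>?C. unranked n (hist_rel h) p")
      case True
      then have "\<exists>p. p \<in> ?C \<and> unranked n (hist_rel h) p" by blast
      from someI_ex[OF this] True show ?thesis unfolding \<sigma>_def by simp
    next
      case False
      from someI_ex[OF ex] False show ?thesis unfolding \<sigma>_def by simp
    qed
  qed
  have inv: "set (play n \<sigma> W t) \<subseteq> ?C \<and> distinct (play n \<sigma> W t) \<and>
      (total_rel (alts n) (hist_rel (play n \<sigma> W t)) \<or> length (play n \<sigma> W t) = t)" for t
  proof (induction t)
    case 0
    then show ?case by simp
  next
    case (Suc t)
    let ?h = "play n \<sigma> W t"
    show ?case
    proof (cases "total_rel (alts n) (hist_rel ?h)")
      case True
      then show ?thesis using Suc by simp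
    next
      case False
      have ex: "\<exists>p\<in>?C. unranked n (hist_rel ?h) p" using K Suc False by blast
      then have "\<exists>p. p \<in> ?C \<and> unranked n (hist_rel ?h) p" by blast
      from someI_ex[OF this] ex have pp: "\<sigma> ?h \<in> ?C" "unranked n (hist_rel ?h) (\<sigma> ?h)"
        unfolding \<sigma>_def by auto
      have wl: "winner_loser W (\<sigma> ?h) = \<sigma> ?h" using pp CW unfolding winner_loser_def by auto
      have nin: "\<sigma> ?h \<notin> set ?h" using pp(2) unfolding unranked_def hist_rel_def by (auto dest: r_into_trancl')
      show ?thesis using Suc False pp wl nin by simp
    qed
  qed
  define T where "T = Suc (card ?C)"
  have totT: "total_rel (alts n) (hist_rel (play n \<sigma> W T))"
  proof (rule ccontr)
    assume "\<not> ?thesis"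
    then have "length (play n \<sigma> W T) = T" "set (play n \<sigma> W T) \<subseteq> ?C" "distinct (play n \<sigma> W T)"
      using inv[of T] by auto
    then have "T \<le> card ?C" using finC by (metis card_mono distinct_card)
    then show False unfolding T_def by simp
  qed
  have eqT: "hist_rel (play n \<sigma> W T) = ?R"
  proof
    show "hist_rel (play n \<sigma> W T) \<subseteq> ?R"
      using inv[of T] RC trancl_mono_subset unfolding hist_rel_def by metis
  next
    show "?R \<subseteq> hist_rel (play n \<sigma> W T)"
    proof
      fix p assume pR: "p \<in> ?R"
      obtain x y where p: "p = (x, y)" by fastforce
      have "x \<in> alts n" "y \<in> alts n" "x \<noteq> y"
        using pR p rk unfolding is_ranking_def irrefl_def by auto
      then have "(x, y) \<in> hist_rel (play n \<sigma> W T) \<or> (y, x) \<in> hist_rel (play n \<sigma> W T)"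
        using totT unfolding total_rel_def by blast
      moreover have "hist_rel (play n \<sigma> W T) \<subseteq> ?R"
        using inv[of T] RC trancl_mono_subset unfolding hist_rel_def by metis
      ultimately show "p \<in> hist_rel (play n \<sigma> W T)" using asy pR p by blast
    qed
  qed
  show ?thesis unfolding feasible_def is_outcome_def using rk strat totT eqT by blast
qed

lemma ex_list_gen:
  "finite S \<Longrightarrow> R \<subseteq> S \<times> S \<Longrightarrow> (\<forall>x. (x, x) \<notin> R) \<Longrightarrow> trans R \<Longrightarrow>
   (\<forall>x\<in>S. \<forall>y\<in>S. x \<noteq> y \<longrightarrow> (x, y) \<in> R \<or> (y, x) \<in> R) \<Longrightarrow>
   \<exists>xs. distinct xs \<and> set xs = S \<and> R = rel_of xs"
proof (induction "card S" arbitrary: S R)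
  case 0
  then have "S = {}" by simp
  then have "R = {}" using 0 by blast
  then show ?case using \<open>S = {}\<close> by (intro exI[of _ "[]"]) simp
next
  case (Suc c)
  then have ne: "S \<noteq> {}" by auto
  define f where "f x = card {y \<in> S. (y, x) \<in> R}" for x
  have "Min (f ` S) \<in> f ` S" using Suc.prems(1) ne by simp
  then obtain x where xS: "x \<in> S" and fx: "f x = Min (f ` S)" by auto
  have top: "(y, x) \<notin> R" for y
  proof
    assume yx: "(y, x) \<in> R"
    then have yS: "y \<in> S" using Suc.prems(2) by blast
    have "{z \<in> S. (z, y) \<in> R} \<subset> {z \<in> S. (z, x) \<in> R}"
    proof
      show "{z \<in> S. (z, y) \<in> R} \<subseteq> {z \<in> S. (z, x) \<in> R}"
        using yx Suc.prems(4) unfolding trans_def by blast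
      show "{z \<in> S. (z, y) \<in> R} \<noteq> {z \<in> S. (z, x) \<in> R}"
        using yx yS Suc.prems(3) by blast
    qed
    then have "f y < f x" unfolding f_def using Suc.prems(1) by (simp add: psubset_card_mono)
    moreover have "f x \<le> f y" using fx yS Suc.prems(1) by simp
    ultimately show False by simp
  qed
  define S' where "S' = S - {x}"
  define R' where "R' = R \<inter> (S' \<times> S')"
  have "c = card S'" using Suc.hyps(2) xS Suc.prems(1) unfolding S'_def by simp
  moreover have "finite S'" using Suc.prems(1) unfolding S'_def by simp
  moreover have "R' \<subseteq> S' \<times> S'" unfolding R'_def by blast
  moreover have "\<forall>x. (x, x) \<notin> R'" using Suc.prems(3) unfolding R'_def by blast
  moreover have "trans R'" using Suc.prems(4) unfolding R'_def trans_def by blast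
  moreover have "\<forall>x\<in>S'. \<forall>y\<in>S'. x \<noteq> y \<longrightarrow> (x, y) \<in> R' \<or> (y, x) \<in> R'"
    using Suc.prems(5) unfolding R'_def S'_def by blast
  ultimately obtain xs where xs: "distinct xs" "set xs = S'" "R' = rel_of xs"
    using Suc.hyps(1) by blast
  have "R = {x} \<times> set xs \<union> rel_of xs"
  proof
    show "R \<subseteq> {x} \<times> set xs \<union> rel_of xs"
    proof
      fix p assume pR: "p \<in> R"
      obtain a b where p: "p = (a, b)" by fastforce
      have "a \<in> S" "b \<in> S" using pR p Suc.prems(2) by auto
      moreover have "b \<noteq> x" using top pR p by blast
      moreover have "a \<noteq> b" using Suc.prems(3) pR p by blast
      ultimately show "p \<in> {x} \<times> set xs \<union> rel_of xs"
        using xs pR p unfolding R'_def S'_def by blast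
    qed
  next
    show "{x} \<times> set xs \<union> rel_of xs \<subseteq> R"
    proof
      fix p assume "p \<in> {x} \<times> set xs \<union> rel_of xs"
      then consider "p \<in> {x} \<times> set xs" | "p \<in> rel_of xs" by blast
      then show "p \<in> R"
      proof cases
        case 1
        then obtain y where y: "p = (x, y)" "y \<in> S'" using xs by blast
        then have "y \<in> S" "y \<noteq> x" unfolding S'_def by auto
        then show ?thesis using Suc.prems(5) xS top y by blast
      next
        case 2
        then show ?thesis using xs unfolding R'_def by blast
      qed
    qed
  qed
  moreover have "distinct (x # xs)" using xs unfolding S'_def by simp
  moreover have "set (x # xs) = S" using xs xS unfolding S'_def by auto
  ultimately show ?case by (intro exI[of _ "x # xs"]) simp
qed

lemma ranking_ex_list:
  assumes "is_ranking n R"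
  shows "\<exists>xs. distinct xs \<and> set xs = alts n \<and> R = rel_of xs"
  using assms ex_list_gen[of "alts n" R] unfolding is_ranking_def irrefl_def total_rel_def alts_def
  by simp

definition perm_idx :: "nat list \<Rightarrow> (nat \<Rightarrow> nat) \<Rightarrow> nat list" where
  "perm_idx xs f = map (\<lambda>i. xs ! f i) [0..<length xs]"

lemma perm_idx_length[simp]: "length (perm_idx xs f) = length xs"
  unfolding perm_idx_def by simp

lemma perm_idx_nth[simp]: "i < length xs \<Longrightarrow> perm_idx xs f ! i = xs ! f i"
  unfolding perm_idx_def by simp

lemma perm_idx_props:
  assumes fg: "\<forall>i<length xs. f i < length xs \<and> g i < length xs \<and> f (g i) = i \<and> g (f i) = i"
    and d: "distinct xs"
  shows "distinct (perm_idx xs f)" "set (perm_idx xs f) = set xs"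
proof -
  show "distinct (perm_idx xs f)"
    unfolding distinct_conv_nth
  proof (intro allI impI)
    fix i j assume "i < length (perm_idx xs f)" "j < length (perm_idx xs f)" "i \<noteq> j"
    then show "perm_idx xs f ! i \<noteq> perm_idx xs f ! j"
      using fg d by (simp add: nth_eq_iff_index_eq) metis
  qed
  show "set (perm_idx xs f) = set xs"
  proof
    show "set (perm_idx xs f) \<subseteq> set xs"
      using fg unfolding perm_idx_def by auto
    show "set xs \<subseteq> set (perm_idx xs f)"
    proof
      fix x assume "x \<in> set xs"
      then obtain i where i: "i < length xs" "x = xs ! i" by (auto simp: in_set_conv_nth)
      then have "x = perm_idx xs f ! g i" "g i < length (perm_idx xs f)" using fg by auto
      then show "x \<in> set (perm_idx xs f)" by (metis nth_mem)
    qed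
  qed
qed

definition succ :: "nat rel \<Rightarrow> nat list \<Rightarrow> nat rel \<Rightarrow> nat \<Rightarrow> bool" where
  "succ P xs W k \<longleftrightarrow> (xs ! (5*k+3), xs ! (5*k+1)) \<in> P \<and> (xs ! (5*k+3), xs ! (5*k+2)) \<in> P \<and>
     (xs ! (5*k), xs ! (5*k+3)) \<in> W \<and> (xs ! (5*k+3), xs ! (5*k+1)) \<in> W \<and>
     (xs ! (5*k+2), xs ! (5*k+4)) \<in> W"

definition mvf :: "nat \<Rightarrow> nat \<Rightarrow> nat" where
  "mvf k i = (if i = 5*k+1 then 5*k+3 else if i = 5*k+2 then 5*k+1 else if i = 5*k+3 then 5*k+2 else i)"

definition mvg :: "nat \<Rightarrow> nat \<Rightarrow> nat" where
  "mvg k i = (if i = 5*k+3 then 5*k+1 else if i = 5*k+1 then 5*k+2 else if i = 5*k+2 then 5*k+3 else i)"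

lemma ranking_asym: "is_ranking n P \<Longrightarrow> (x, y) \<in> P \<Longrightarrow> (y, x) \<notin> P"
  unfolding is_ranking_def irrefl_def trans_def by blast

lemma improve:
  assumes P: "is_ranking n P" and W: "is_tournament n W" and d: "distinct xs" and s: "set xs = alts n"
    and a: "adj xs W" and k: "5*k+4 < length xs" and sc: "succ P xs W k"
  shows "\<not> unimprovable n P W (rel_of xs)"
proof -
  define ys where "ys = perm_idx xs (mvf k)"
  have fg: "\<forall>i<length xs. mvf k i < length xs \<and> mvg k i < length xs \<and> mvf k (mvg k i) = i \<and> mvg k (mvf k i) = i"
    using k unfolding mvf_def mvg_def by auto
  have dy: "distinct ys" and sy: "set ys = alts n"
    using perm_idx_props[OF fg d] s unfolding ys_def by auto
  have ly: "length ys = length xs" unfolding ys_def by simp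
  have yn: "ys ! i = xs ! mvf k i" if "i < length xs" for i using that unfolding ys_def by simp
  have adjy: "adj ys W"
    unfolding adj_def
  proof (intro allI impI)
    fix i assume i: "Suc i < length ys"
    then have i': "Suc i < length xs" using ly by simp
    consider "i = 5*k" | "i = 5*k+1" | "i = 5*k+2" | "i = 5*k+3"
      | "i \<noteq> 5*k \<and> i \<noteq> 5*k+1 \<and> i \<noteq> 5*k+2 \<and> i \<noteq> 5*k+3" by blast
    then show "(ys ! i, ys ! Suc i) \<in> W"
    proof cases
      case 1
      then show ?thesis using sc i' yn unfolding succ_def mvf_def by auto
    next
      case 2
      then show ?thesis using sc i' yn unfolding succ_def mvf_def by auto
    next
      case 3
      then have "(xs ! (5*k+1), xs ! Suc (5*k+1)) \<in> W" using a i' unfolding adj_def by auto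
      then show ?thesis using 3 i' yn unfolding mvf_def by (auto simp: numeral_eq_Suc)
    next
      case 4
      then show ?thesis using sc i' yn unfolding succ_def mvf_def by (auto simp: numeral_eq_Suc)
    next
      case 5
      then have "mvf k i = i" "mvf k (Suc i) = Suc i" unfolding mvf_def by auto
      then show ?thesis using a i' yn unfolding adj_def by auto
    qed
  qed
  have fy: "feasible n W (rel_of ys)" by (rule adj_feasible[OF W dy sy adjy])
  have c1: "ys ! (5*k+1) = xs ! (5*k+3)" "ys ! (5*k+2) = xs ! (5*k+1)"
    using yn k unfolding mvf_def by auto
  have "(ys ! (5*k+1), ys ! (5*k+2)) \<in> rel_of ys" using rel_of_iff[OF dy] k ly by simp
  then have ca: "(xs ! (5*k+3), xs ! (5*k+1)) \<in> rel_of ys" using c1 by simp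
  have "(xs ! (5*k+1), xs ! (5*k+3)) \<in> rel_of xs" using rel_of_iff[OF d] k by simp
  then have "(xs ! (5*k+3), xs ! (5*k+1)) \<notin> rel_of xs" using rel_of_asym[OF d] by blast
  then have ne: "rel_of ys \<noteq> rel_of xs" using ca by blast
  have ma: "more_aligned P (rel_of ys) (rel_of xs)"
    unfolding more_aligned_def
  proof (intro allI impI)
    fix x y assume xyP: "(x, y) \<in> P" and xyR: "(x, y) \<in> rel_of xs"
    then obtain i j where ij: "i < j" "j < length xs" "x = xs ! i" "y = xs ! j"
      unfolding rel_of_nth by blast
    have nc: "\<not> (i = 5*k+1 \<and> j = 5*k+3)" "\<not> (i = 5*k+2 \<and> j = 5*k+3)"
      using sc xyP ij ranking_asym[OF P] unfolding succ_def by auto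
    have "mvg k i < mvg k j" using ij(1) nc unfolding mvg_def by auto
    moreover have "mvg k j < length ys" using fg ij ly by auto
    moreover have "x = ys ! mvg k i" "y = ys ! mvg k j" using fg ij yn by auto
    ultimately show "(x, y) \<in> rel_of ys" unfolding rel_of_nth by blast
  qed
  show ?thesis unfolding unimprovable_def using fy ne ma by blast
qed

definition trf :: "nat \<Rightarrow> nat \<Rightarrow> nat \<Rightarrow> nat" where
  "trf p q i = (if i = p then q else if i = q then p else i)"

definition sel :: "nat rel \<Rightarrow> nat list \<Rightarrow> nat \<Rightarrow> nat" where
  "sel P xs k = (if (xs ! (5*k+1), xs ! (5*k+2)) \<in> P \<and> (xs ! (5*k+1), xs ! (5*k+3)) \<in> P then 5*k+1
     else if (xs ! (5*k+2), xs ! (5*k+1)) \<in> P \<and> (xs ! (5*k+2), xs ! (5*k+3)) \<in> P then 5*k+2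
     else 5*k+3)"

definition modl :: "nat rel \<Rightarrow> nat list \<Rightarrow> nat \<Rightarrow> nat list" where
  "modl P xs k = perm_idx xs (trf (sel P xs k) (5*k+3))"

definition Eset :: "nat list \<Rightarrow> nat \<Rightarrow> nat rel" where
  "Eset ys k = {(ys ! (5*k), ys ! (5*k+1)), (ys ! (5*k+1), ys ! (5*k+2)), (ys ! (5*k+2), ys ! (5*k+3)),
     (ys ! (5*k+3), ys ! (5*k+4)), (ys ! (5*k), ys ! (5*k+3)), (ys ! (5*k+3), ys ! (5*k+1)),
     (ys ! (5*k+2), ys ! (5*k+4))}"

definition EE :: "nat list \<Rightarrow> nat \<Rightarrow> nat rel" where
  "EE ys k = Eset ys k \<union> (Eset ys k)\<inverse>"

definition Wk :: "nat list \<Rightarrow> nat \<Rightarrow> nat set" where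
  "Wk ys k = {ys ! (5*k), ys ! (5*k+1), ys ! (5*k+2), ys ! (5*k+3), ys ! (5*k+4)}"

definition modW :: "nat list \<Rightarrow> nat \<Rightarrow> nat rel \<Rightarrow> nat rel" where
  "modW ys k W = (W - (Eset ys k)\<inverse>) \<union> Eset ys k"

lemma modW_outside: "x \<notin> Wk ys k \<or> y \<notin> Wk ys k \<Longrightarrow> (x, y) \<in> modW ys k W \<longleftrightarrow> (x, y) \<in> W"
  unfolding modW_def Eset_def Wk_def by auto

lemma Eset_sub: "Eset ys k \<subseteq> modW ys k W"
  unfolding modW_def by blast

lemma tourn_mod:
  assumes W: "is_tournament n W" and E: "E \<subseteq> alts n \<times> alts n" and as: "\<forall>x y. (x, y) \<in> E \<longrightarrow> (y, x) \<notin> E"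
  shows "is_tournament n ((W - E\<inverse>) \<union> E)"
  using assms unfolding is_tournament_def total_rel_def by blast

lemma max3:
  assumes P: "is_ranking n P" and in3: "a \<in> alts n" "b \<in> alts n" "c \<in> alts n"
    and ne: "a \<noteq> b" "a \<noteq> c" "b \<noteq> c"
    and n1: "\<not> ((a, b) \<in> P \<and> (a, c) \<in> P)" and n2: "\<not> ((b, a) \<in> P \<and> (b, c) \<in> P)"
  shows "(c, a) \<in> P \<and> (c, b) \<in> P"
proof -
  have tot: "\<And>x y. x \<in> alts n \<Longrightarrow> y \<in> alts n \<Longrightarrow> x \<noteq> y \<Longrightarrow> (x, y) \<in> P \<or> (y, x) \<in> P"
    using P unfolding is_ranking_def total_rel_def by blast
  have tr: "\<And>x y z. (x, y) \<in> P \<Longrightarrow> (y, z) \<in> P \<Longrightarrow> (x, z) \<in> P"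
    using P unfolding is_ranking_def trans_def by blast
  have as: "\<And>x y. (x, y) \<in> P \<Longrightarrow> (y, x) \<notin> P" using ranking_asym[OF P] by blast
  show ?thesis using tot[OF in3(1) in3(2) ne(1)] tot[OF in3(1) in3(3) ne(2)] tot[OF in3(2) in3(3) ne(3)]
    n1 n2 tr as by metis
qed

lemma Wk_img: "Wk ys k = (\<lambda>e. ys ! (5*k+e)) ` {..4}"
proof -
  have "{..4::nat} = {0,1,2,3,4}" by auto
  then show ?thesis unfolding Wk_def by simp
qed

lemma modify_props:
  assumes P: "is_ranking n P" and W: "is_tournament n W" and d: "distinct xs" and s: "set xs = alts n"
    and a: "adj xs W" and k: "5*k+4 < length xs"
  defines "ys \<equiv> modl P xs k"
  defines "W' \<equiv> modW ys k W"
  shows "distinct ys" "set ys = alts n" "is_tournament n W'" "adj ys W'" "succ P ys W' k"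
    "\<And>j. 5*j+4 < length xs \<Longrightarrow> j \<noteq> k \<Longrightarrow> succ P ys W' j \<longleftrightarrow> succ P xs W j"
    "xs \<in> (\<lambda>q. perm_idx ys (trf q (5*k+3))) ` {5*k+1, 5*k+2, 5*k+3}"
    "W = (W' - EE ys k) \<union> (W \<inter> EE ys k)"
proof -
  define q where "q = sel P xs k"
  define f where "f = trf q (5*k+3)"
  have q3: "q = 5*k+1 \<or> q = 5*k+2 \<or> q = 5*k+3" unfolding q_def sel_def by auto
  have ys: "ys = perm_idx xs f" unfolding ys_def modl_def f_def q_def by simp
  have ff: "\<forall>i<length xs. f i < length xs \<and> f i < length xs \<and> f (f i) = i \<and> f (f i) = i"
    using k q3 unfolding f_def trf_def by auto
  have frange: "5*k \<le> f i \<and> f i \<le> 5*k+4" if "5*k \<le> i" "i \<le> 5*k+4" for i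
    using that q3 unfolding f_def trf_def by auto
  have fid: "f i = i" if "i \<noteq> 5*k+1" "i \<noteq> 5*k+2" "i \<noteq> 5*k+3" for i
    using that q3 unfolding f_def trf_def by auto
  show dy: "distinct ys" and sy: "set ys = alts n" using perm_idx_props[OF ff d] s ys by auto
  have ly: "length ys = length xs" using ys by simp
  have yn: "ys ! i = xs ! f i" if "i < length xs" for i using that ys by simp
  have notWk: "xs ! i \<notin> Wk ys k" if "i < length xs" "i < 5*k \<or> 5*k+4 < i" for i
  proof
    assume "xs ! i \<in> Wk ys k"
    then obtain e where e: "e \<le> 4" "xs ! i = ys ! (5*k+e)" using Wk_img by auto
    have "5*k+e < length xs" using e k by simp
    then have "xs ! i = xs ! f (5*k+e)" using e yn by simp
    moreover have "f (5*k+e) < length xs" using ff \<open>5*k+e < length xs\<close> by blast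
    ultimately have "i = f (5*k+e)" using d that by (simp add: nth_eq_iff_index_eq)
    moreover have "5*k \<le> f (5*k+e) \<and> f (5*k+e) \<le> 5*k+4" using frange e by simp
    ultimately show False using that by simp
  qed
  have kk: "5*k+e < length xs" if "e \<le> 4" for e using that k by simp
  have dd: "ys ! (5*k+i) \<noteq> ys ! (5*k+j)" if "i \<le> 4" "j \<le> 4" "i \<noteq> j" for i j
    using that dy kk ly by (simp add: nth_eq_iff_index_eq)
  have n01: "ys ! (5*k) \<noteq> ys ! (5*k+1)" using dd[of 0 1] by simp
  have n02: "ys ! (5*k) \<noteq> ys ! (5*k+2)" using dd[of 0 2] by simp
  have n03: "ys ! (5*k) \<noteq> ys ! (5*k+3)" using dd[of 0 3] by simp
  have n04: "ys ! (5*k) \<noteq> ys ! (5*k+4)" using dd[of 0 4] by simp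
  have n12: "ys ! (5*k+1) \<noteq> ys ! (5*k+2)" using dd[of 1 2] by simp
  have n13: "ys ! (5*k+1) \<noteq> ys ! (5*k+3)" using dd[of 1 3] by simp
  have n14: "ys ! (5*k+1) \<noteq> ys ! (5*k+4)" using dd[of 1 4] by simp
  have n23: "ys ! (5*k+2) \<noteq> ys ! (5*k+3)" using dd[of 2 3] by simp
  have n24: "ys ! (5*k+2) \<noteq> ys ! (5*k+4)" using dd[of 2 4] by simp
  have n34: "ys ! (5*k+3) \<noteq> ys ! (5*k+4)" using dd[of 3 4] by simp
  have inal: "ys ! (5*k+e) \<in> alts n" if "e \<le> 4" for e
    using kk[OF that] ly sy by (metis nth_mem)
  have inal0: "ys ! (5*k) \<in> alts n" using inal[of 0] by simp
  have Esub: "Eset ys k \<subseteq> alts n \<times> alts n"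
    unfolding Eset_def using inal0 inal[of 1] inal[of 2] inal[of 3] inal[of 4] by auto
  have Eas: "\<forall>x y. (x, y) \<in> Eset ys k \<longrightarrow> (y, x) \<notin> Eset ys k"
    unfolding Eset_def using n01 n02 n03 n04 n12 n13 n14 n23 n24 n34 by auto
  show "is_tournament n W'" unfolding W'_def modW_def by (rule tourn_mod[OF W Esub Eas])
  show "adj ys W'" unfolding adj_def
  proof (intro allI impI)
    fix i assume i: "Suc i < length ys"
    consider "i = 5*k" | "i = 5*k+1" | "i = 5*k+2" | "i = 5*k+3" | "i < 5*k" | "5*k+4 \<le> i" by linarith
    then show "(ys ! i, ys ! Suc i) \<in> W'"
    proof cases
      case 1
      then show ?thesis using Eset_sub[of ys k W] unfolding W'_def Eset_def by auto
    next
      case 2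
      then have si: "Suc i = 5*k+2" by simp
      have X: "(ys ! (5*k+1), ys ! (5*k+2)) \<in> W'" using Eset_sub[of ys k W] unfolding W'_def Eset_def by blast
      show ?thesis using X 2 si by metis
    next
      case 3
      then have si: "Suc i = 5*k+3" by simp
      have X: "(ys ! (5*k+2), ys ! (5*k+3)) \<in> W'" using Eset_sub[of ys k W] unfolding W'_def Eset_def by blast
      show ?thesis using X 3 si by metis
    next
      case 4
      then have si: "Suc i = 5*k+4" by simp
      have X: "(ys ! (5*k+3), ys ! (5*k+4)) \<in> W'" using Eset_sub[of ys k W] unfolding W'_def Eset_def by blast
      show ?thesis using X 4 si by metis
    next
      case 5
      then have e: "ys ! i = xs ! i" "ys ! Suc i = xs ! Suc i" using yn fid i ly by auto
      have "(xs ! i, xs ! Suc i) \<in> W" using a i ly unfolding adj_def by simp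
      moreover have "xs ! i \<notin> Wk ys k" using notWk 5 i ly by simp
      ultimately show ?thesis using e modW_outside unfolding W'_def by metis
    next
      case 6
      then have e: "ys ! i = xs ! i" "ys ! Suc i = xs ! Suc i" using yn fid i ly by auto
      have "(xs ! i, xs ! Suc i) \<in> W" using a i ly unfolding adj_def by simp
      moreover have "xs ! Suc i \<notin> Wk ys k" using notWk 6 i ly by simp
      ultimately show ?thesis using e modW_outside unfolding W'_def by metis
    qed
  qed
  have Pc: "(ys ! (5*k+3), ys ! (5*k+1)) \<in> P \<and> (ys ! (5*k+3), ys ! (5*k+2)) \<in> P"
  proof -
    have l123: "5*k+1 < length xs" "5*k+2 < length xs" "5*k+3 < length xs" using k by simp_all
    have y1: "ys ! (5*k+1) = xs ! f (5*k+1)" "ys ! (5*k+2) = xs ! f (5*k+2)" "ys ! (5*k+3) = xs ! f (5*k+3)"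
      using yn[OF l123(1)] yn[OF l123(2)] yn[OF l123(3)] by blast+
    have xal: "xs ! (5*k+e) \<in> alts n" if "e \<le> 4" for e using kk[OF that] s by (metis nth_mem)
    have xne: "xs ! (5*k+i) \<noteq> xs ! (5*k+j)" if "i \<le> 4" "j \<le> 4" "i \<noteq> j" for i j
      using that d kk by (simp add: nth_eq_iff_index_eq)
    consider "q = 5*k+1" | "q = 5*k+2" | "q = 5*k+3" using q3 by blast
    then show ?thesis
    proof cases
      case 1
      then have "(xs ! (5*k+1), xs ! (5*k+2)) \<in> P \<and> (xs ! (5*k+1), xs ! (5*k+3)) \<in> P"
        unfolding q_def sel_def by (auto split: if_splits)
      moreover have "f (5*k+1) = 5*k+3" "f (5*k+2) = 5*k+2" "f (5*k+3) = 5*k+1"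
        using 1 unfolding f_def trf_def by auto
      ultimately show ?thesis using y1 by simp
    next
      case 2
      then have "(xs ! (5*k+2), xs ! (5*k+1)) \<in> P \<and> (xs ! (5*k+2), xs ! (5*k+3)) \<in> P"
        unfolding q_def sel_def by (auto split: if_splits)
      moreover have "f (5*k+1) = 5*k+1" "f (5*k+2) = 5*k+3" "f (5*k+3) = 5*k+2"
        using 2 unfolding f_def trf_def by auto
      ultimately show ?thesis using y1 by simp
    next
      case 3
      then have c1: "\<not> ((xs ! (5*k+1), xs ! (5*k+2)) \<in> P \<and> (xs ! (5*k+1), xs ! (5*k+3)) \<in> P)"
        and c2: "\<not> ((xs ! (5*k+2), xs ! (5*k+1)) \<in> P \<and> (xs ! (5*k+2), xs ! (5*k+3)) \<in> P)"
        unfolding q_def sel_def by (auto split: if_splits)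
      have "(xs ! (5*k+3), xs ! (5*k+1)) \<in> P \<and> (xs ! (5*k+3), xs ! (5*k+2)) \<in> P"
        using max3[OF P xal[of 1] xal[of 2] xal[of 3] xne[of 1 2] xne[of 1 3] xne[of 2 3] c1 c2] by simp
      moreover have "f (5*k+1) = 5*k+1" "f (5*k+2) = 5*k+2" "f (5*k+3) = 5*k+3"
        using 3 unfolding f_def trf_def by auto
      ultimately show ?thesis using y1 by simp
    qed
  qed
  show "succ P ys W' k"
    unfolding succ_def using Pc Eset_sub[of ys k W] unfolding W'_def Eset_def by auto
  show "succ P ys W' j \<longleftrightarrow> succ P xs W j" if j: "5*j+4 < length xs" "j \<noteq> k" for j
  proof -
    have jk: "5*j+e < 5*k \<or> 5*k+4 < 5*j+e" if "e \<le> 4" for e using j that by linarith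
    have e: "ys ! (5*j+e) = xs ! (5*j+e)" if "e \<le> 4" for e
      using yn fid jk[OF that] that j by auto
    have o: "xs ! (5*j+e) \<notin> Wk ys k" if "e \<le> 4" for e using notWk jk[OF that] that j by simp
    have e0: "ys ! (5*j) = xs ! (5*j)" using e[of 0] by simp
    have o0: "xs ! (5*j) \<notin> Wk ys k" using o[of 0] by simp
    show ?thesis unfolding succ_def W'_def
      using e0 e[of 1] e[of 2] e[of 3] e[of 4] o0 o[of 2] o[of 3]
        modW_outside[of "xs ! (5*j)" ys k] modW_outside[of "xs ! (5*j+3)" ys k]
        modW_outside[of "xs ! (5*j+2)" ys k]
      by simp
  qed
  have "xs = perm_idx ys f"
  proof (rule nth_equalityI)
    show "length xs = length (perm_idx ys f)" using ly by simp
    fix i assume "i < length xs"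
    then show "xs ! i = perm_idx ys f ! i" using ly yn ff by simp
  qed
  then show "xs \<in> (\<lambda>q. perm_idx ys (trf q (5*k+3))) ` {5*k+1, 5*k+2, 5*k+3}"
    using q3 unfolding f_def by blast
  show "W = (W' - EE ys k) \<union> (W \<inter> EE ys k)"
    unfolding W'_def modW_def EE_def by blast
qed

definition Fl :: "nat \<Rightarrow> (nat list \<times> nat rel) set" where
  "Fl n = {(xs, W). distinct xs \<and> set xs = alts n \<and> is_tournament n W \<and> adj xs W}"

definition AF :: "nat rel \<Rightarrow> nat \<Rightarrow> (nat list \<times> nat rel) set" where
  "AF P n = {p \<in> Fl n. \<forall>k < n div 5. \<not> succ P (fst p) (snd p) k}"

definition phi :: "nat rel \<Rightarrow> (nat list \<times> nat rel) \<times> nat \<Rightarrow> nat list \<times> nat rel" where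
  "phi P pk = (let xs = fst (fst pk); W = snd (fst pk); k = snd pk; ys = modl P xs k in (ys, modW ys k W))"

lemma card_alts: "card (alts n) = n" unfolding alts_def by simp

lemma length_of_set: "distinct xs \<Longrightarrow> set xs = alts n \<Longrightarrow> length xs = n"
  using distinct_card card_alts by metis

lemma win_bound: "(k::nat) < n div 5 \<Longrightarrow> 5*k+4 < n"
proof -
  assume "k < n div 5"
  then have "5 * Suc k \<le> 5 * (n div 5)" by simp
  moreover have "5 * (n div 5) \<le> n" by simp
  ultimately show "5*k+4 < n" by simp
qed

lemma finite_Fl: "finite (Fl n)"
proof -
  have "Fl n \<subseteq> {xs. set xs \<subseteq> alts n \<and> length xs = n} \<times> Pow (alts n \<times> alts n)"
    unfolding Fl_def is_tournament_def using length_of_set by auto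
  moreover have "finite ({xs. set xs \<subseteq> alts n \<and> length xs = n} \<times> Pow (alts n \<times> alts n))"
    unfolding alts_def by (intro finite_cartesian_product finite_lists_length_eq) auto
  ultimately show ?thesis by (rule finite_subset)
qed

lemma double_count:
  assumes "finite A" "finite B" "f ` A \<subseteq> B" "\<forall>y\<in>B. card {x\<in>A. f x = y} \<le> C"
  shows "card A \<le> C * card B"
proof -
  have "A = (\<Union>y\<in>B. {x\<in>A. f x = y})" using assms(3) by blast
  then have "card A \<le> (\<Sum>y\<in>B. card {x\<in>A. f x = y})"
    using card_UN_le[OF assms(2), of "\<lambda>y. {x\<in>A. f x = y}"] by simp
  also have "\<dots> \<le> card B * C" using sum_bounded_above[of B "\<lambda>y. card {x\<in>A. f x = y}" C] assms(4) by simp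
  finally show ?thesis by (simp add: mult.commute)
qed

lemma EE_list: "EE ys k = set [(ys ! (5*k), ys ! (5*k+1)), (ys ! (5*k+1), ys ! (5*k+2)), (ys ! (5*k+2), ys ! (5*k+3)),
     (ys ! (5*k+3), ys ! (5*k+4)), (ys ! (5*k), ys ! (5*k+3)), (ys ! (5*k+3), ys ! (5*k+1)),
     (ys ! (5*k+2), ys ! (5*k+4)),
     (ys ! (5*k+1), ys ! (5*k)), (ys ! (5*k+2), ys ! (5*k+1)), (ys ! (5*k+3), ys ! (5*k+2)),
     (ys ! (5*k+4), ys ! (5*k+3)), (ys ! (5*k+3), ys ! (5*k)), (ys ! (5*k+1), ys ! (5*k+3)),
     (ys ! (5*k+4), ys ! (5*k+2))]"
  unfolding EE_def Eset_def by auto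

lemma EE_card: "card (EE ys k) \<le> 14"
  using card_length[of "[(ys ! (5*k), ys ! (5*k+1)), (ys ! (5*k+1), ys ! (5*k+2)), (ys ! (5*k+2), ys ! (5*k+3)),
     (ys ! (5*k+3), ys ! (5*k+4)), (ys ! (5*k), ys ! (5*k+3)), (ys ! (5*k+3), ys ! (5*k+1)),
     (ys ! (5*k+2), ys ! (5*k+4)),
     (ys ! (5*k+1), ys ! (5*k)), (ys ! (5*k+2), ys ! (5*k+1)), (ys ! (5*k+3), ys ! (5*k+2)),
     (ys ! (5*k+4), ys ! (5*k+3)), (ys ! (5*k+3), ys ! (5*k)), (ys ! (5*k+1), ys ! (5*k+3)),
     (ys ! (5*k+4), ys ! (5*k+2))]"] unfolding EE_list by simp

lemma EE_finite: "finite (EE ys k)"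
  unfolding EE_list by simp

lemma phi_eq: "phi P ((xs, W), k) = (modl P xs k, modW (modl P xs k) k W)"
  unfolding phi_def by (simp add: Let_def)

lemma phi_in:
  assumes P: "is_ranking n P" and x: "(xs, W) \<in> Fl n" and k: "k < n div 5"
  shows "phi P ((xs, W), k) \<in> Fl n"
proof -
  have d: "distinct xs" "set xs = alts n" "is_tournament n W" "adj xs W" using x unfolding Fl_def by auto
  have kl: "5*k+4 < length xs" using win_bound[OF k] length_of_set[OF d(1,2)] by simp
  note mp = modify_props[OF P d(3) d(1) d(2) d(4) kl]
  show ?thesis unfolding phi_eq Fl_def using mp(1-4) by simp
qed

lemma phi_succ:
  assumes P: "is_ranking n P" and x: "(xs, W) \<in> AF P n" and k: "k < n div 5" and j: "j < n div 5"
  shows "succ P (fst (phi P ((xs, W), k))) (snd (phi P ((xs, W), k))) j \<longleftrightarrow> j = k"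
proof -
  have x': "(xs, W) \<in> Fl n" and nf: "\<forall>k < n div 5. \<not> succ P xs W k" using x unfolding AF_def by auto
  have d: "distinct xs" "set xs = alts n" "is_tournament n W" "adj xs W" using x' unfolding Fl_def by auto
  have kl: "5*k+4 < length xs" using win_bound[OF k] length_of_set[OF d(1,2)] by simp
  have jl: "5*j+4 < length xs" using win_bound[OF j] length_of_set[OF d(1,2)] by simp
  note mp = modify_props[OF P d(3) d(1) d(2) d(4) kl]
  show ?thesis
  proof (cases "j = k")
    case True
    then show ?thesis using mp(5) unfolding phi_eq by simp
  next
    case False
    then show ?thesis using mp(6)[OF jl False] nf j unfolding phi_eq by simp
  qed
qed

lemma phi_fiber:
  assumes P: "is_ranking n P" and x: "(xs, W) \<in> Fl n" and k: "k < n div 5"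
    and y: "phi P ((xs, W), k) = (ys, W')"
  shows "xs \<in> (\<lambda>q. perm_idx ys (trf q (5*k+3))) ` {5*k+1, 5*k+2, 5*k+3}"
    "W = (W' - EE ys k) \<union> (W \<inter> EE ys k)"
proof -
  have d: "distinct xs" "set xs = alts n" "is_tournament n W" "adj xs W" using x unfolding Fl_def by auto
  have kl: "5*k+4 < length xs" using win_bound[OF k] length_of_set[OF d(1,2)] by simp
  note mp = modify_props[OF P d(3) d(1) d(2) d(4) kl]
  have "ys = modl P xs k" "W' = modW ys k W" using y unfolding phi_eq by auto
  then show "xs \<in> (\<lambda>q. perm_idx ys (trf q (5*k+3))) ` {5*k+1, 5*k+2, 5*k+3}"
    "W = (W' - EE ys k) \<union> (W \<inter> EE ys k)" using mp(7,8) by auto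
qed

lemma count_AF:
  assumes P: "is_ranking n P"
  shows "card (AF P n) * (n div 5) \<le> 49152 * card (Fl n)"
proof -
  define m where "m = n div 5"
  define A where "A = AF P n \<times> {..<m}"
  have AFs: "AF P n \<subseteq> Fl n" unfolding AF_def by auto
  have finA: "finite A" unfolding A_def using finite_subset[OF AFs finite_Fl] by simp
  have cA: "card A = card (AF P n) * m" unfolding A_def by (simp add: card_cartesian_product)
  have img: "phi P ` A \<subseteq> Fl n"
    using phi_in[OF P] AFs unfolding A_def m_def by auto
  have fib: "\<forall>y\<in>Fl n. card {x\<in>A. phi P x = y} \<le> 49152"
  proof
    fix y assume "y \<in> Fl n"
    obtain ys W' where y: "y = (ys, W')" by fastforce
    let ?Fb = "{x\<in>A. phi P x = y}"
    show "card ?Fb \<le> 49152"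
    proof (cases "?Fb = {}")
      case True
      then have "card ?Fb = 0" by (metis card.empty)
      then show ?thesis by simp
    next
      case False
      then obtain xs0 W0 k0 where x0: "((xs0, W0), k0) \<in> ?Fb" by auto
      have k0: "k0 < n div 5" "(xs0, W0) \<in> AF P n" using x0 unfolding A_def m_def by auto
      define L where "L = (\<lambda>q. perm_idx ys (trf q (5*k0+3))) ` {5*k0+1, 5*k0+2, 5*k0+3}"
      define G where "G = (\<lambda>(zs :: nat list, S). ((zs, (W' - EE ys k0) \<union> S), k0))"
      have sub: "?Fb \<subseteq> G ` (L \<times> Pow (EE ys k0))"
      proof
        fix x assume xF: "x \<in> ?Fb"
        obtain xs W k where xx: "x = ((xs, W), k)" by (metis prod.collapse)
        have kA: "k < n div 5" "(xs, W) \<in> AF P n" using xF xx unfolding A_def m_def by auto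
        have e1: "succ P ys W' k"
          using phi_succ[OF P kA(2) kA(1) kA(1)] xF xx y by simp
        have "k = k0"
          using phi_succ[OF P k0(2) k0(1) kA(1)] e1 x0 y by simp
        have kF: "(xs, W) \<in> Fl n" using kA(2) unfolding AF_def by auto
        have ph: "phi P ((xs, W), k) = (ys, W')" using xF xx y by simp
        note fb = phi_fiber[OF P kF kA(1) ph]
        have "xs \<in> L" using fb(1) \<open>k = k0\<close> unfolding L_def by simp
        moreover have "W \<inter> EE ys k0 \<in> Pow (EE ys k0)" by blast
        moreover have "x = G (xs, W \<inter> EE ys k0)"
          unfolding G_def using xx fb(2) \<open>k = k0\<close> by simp
        ultimately show "x \<in> G ` (L \<times> Pow (EE ys k0))" by blast
      qed
      have finL: "finite L" unfolding L_def by simp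
      have cL: "card L \<le> 3" unfolding L_def
        by (rule order_trans[OF card_image_le]) (simp_all add: card_insert_le_m1)
      have cP: "card (Pow (EE ys k0)) \<le> 2 ^ 14"
      proof -
        have "card (Pow (EE ys k0)) = 2 ^ card (EE ys k0)" using card_Pow EE_finite by blast
        also have "\<dots> \<le> 2 ^ 14" using EE_card[of ys k0] by (intro power_increasing) auto
        finally show ?thesis .
      qed
      have "card ?Fb \<le> card (G ` (L \<times> Pow (EE ys k0)))"
        using sub finL EE_finite by (intro card_mono) auto
      also have "\<dots> \<le> card (L \<times> Pow (EE ys k0))" by (rule card_image_le) (simp add: finL EE_finite)
      also have "\<dots> = card L * card (Pow (EE ys k0))" by (rule card_cartesian_product)
      also have "\<dots> \<le> 3 * 2 ^ 14" using cL cP by (intro mult_le_mono) auto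
      finally show ?thesis by simp
    qed
  qed
  have "card A \<le> 49152 * card (Fl n)" by (rule double_count[OF finA finite_Fl img fib])
  then show ?thesis using cA unfolding m_def by simp
qed

lemma card_U_F:
  assumes P: "is_ranking n P"
  shows "card {(R, W). is_ranking n R \<and> is_tournament n W \<and> feasible n W R \<and> unimprovable n P W R} * (n div 5)
         \<le> 49152 * card {(R, W). is_ranking n R \<and> is_tournament n W \<and> feasible n W R}"
proof -
  let ?U = "{(R, W). is_ranking n R \<and> is_tournament n W \<and> feasible n W R \<and> unimprovable n P W R}"
  let ?F = "{(R, W). is_ranking n R \<and> is_tournament n W \<and> feasible n W R}"
  let ?g = "map_prod rel_of (id :: nat rel \<Rightarrow> nat rel)"
  have AFs: "AF P n \<subseteq> Fl n" unfolding AF_def by auto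
  have finAF: "finite (AF P n)" using finite_subset[OF AFs finite_Fl] .
  have Usub: "?U \<subseteq> ?g ` AF P n"
  proof
    fix p assume "p \<in> ?U"
    then obtain R W where p: "p = (R, W)" and R: "is_ranking n R" and W: "is_tournament n W"
      and f: "feasible n W R" and u: "unimprovable n P W R" by blast
    obtain xs where xs: "distinct xs" "set xs = alts n" "R = rel_of xs" using ranking_ex_list[OF R] by blast
    have a: "adj xs W" using feasible_adj[OF W xs(1)] f xs(3) by simp
    have ns: "\<forall>k < n div 5. \<not> succ P xs W k"
    proof (intro allI impI notI)
      fix k assume k: "k < n div 5" and sc: "succ P xs W k"
      have "5*k+4 < length xs" using win_bound[OF k] length_of_set[OF xs(1,2)] by simp
      then show False using improve[OF P W xs(1) xs(2) a _ sc] u xs(3) by simp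
    qed
    have "(xs, W) \<in> AF P n" unfolding AF_def Fl_def using xs W a ns by simp
    then show "p \<in> ?g ` AF P n" using p xs(3) by force
  qed
  have cU: "card ?U \<le> card (AF P n)"
    using card_mono[OF finite_imageI[OF finAF] Usub] card_image_le[OF finAF, of ?g] by linarith
  have finF: "finite ?F"
  proof (rule finite_subset)
    show "?F \<subseteq> Pow (alts n \<times> alts n) \<times> Pow (alts n \<times> alts n)"
      unfolding is_ranking_def is_tournament_def by auto
    show "finite (Pow (alts n \<times> alts n) \<times> Pow (alts n \<times> alts n))" unfolding alts_def by simp
  qed
  have Fsub: "?g ` Fl n \<subseteq> ?F"
  proof
    fix p assume "p \<in> ?g ` Fl n"
    then obtain xs W where p: "p = (rel_of xs, W)" and x: "(xs, W) \<in> Fl n" by auto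
    have d: "distinct xs" "set xs = alts n" "is_tournament n W" "adj xs W" using x unfolding Fl_def by auto
    show "p \<in> ?F" using p ranking_rel_of[OF d(1,2)] adj_feasible[OF d(3) d(1) d(2) d(4)] d(3) by simp
  qed
  have inj: "inj_on ?g (Fl n)"
  proof (rule inj_onI)
    fix x y assume "x \<in> Fl n" "y \<in> Fl n" "?g x = ?g y"
    then show "x = y" unfolding Fl_def using rel_of_inj by (auto simp: map_prod_def split: prod.splits)
  qed
  have cF: "card (Fl n) \<le> card ?F"
    using card_mono[OF finF Fsub] card_image[OF inj] by simp
  have "card ?U * (n div 5) \<le> card (AF P n) * (n div 5)" using cU by simp
  also have "\<dots> \<le> 49152 * card (Fl n)" by (rule count_AF[OF P])
  also have "\<dots> \<le> 49152 * card ?F" using cF by simp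
  finally show ?thesis .
qed

theorem proposition7:
  fixes P :: "nat \<Rightarrow> nat rel"
  assumes "\<And>n. is_ranking n (P n)"
  shows "(\<lambda>n. real (card {(R, W). is_ranking n R \<and> is_tournament n W \<and>
                                   feasible n W R \<and> unimprovable n (P n) W R})
             / real (card {(R, W). is_ranking n R \<and> is_tournament n W \<and> feasible n W R}))
         \<longlonglongrightarrow> 0"
proof -
  define u where "u n = card {(R, W). is_ranking n R \<and> is_tournament n W \<and>
                                   feasible n W R \<and> unimprovable n (P n) W R}" for n
  define f where "f n = card {(R, W). is_ranking n R \<and> is_tournament n W \<and> feasible n W R}" for n
  have key: "u n * (n div 5) \<le> 49152 * f n" for n
    unfolding u_def f_def by (rule card_U_F[OF assms])
  have bound: "real (u n) / real (f n) \<le> 49152 / real (n div 5)" if n: "n \<ge> 5" for n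
  proof (cases "f n = 0")
    case True
    then show ?thesis by simp
  next
    case False
    have m: "n div 5 > 0" using n by simp
    have "real (u n) * real (n div 5) \<le> 49152 * real (f n)"
      using key[of n] by (metis of_nat_mult of_nat_le_iff of_nat_numeral)
    then show ?thesis using False m by (simp add: field_simps)
  qed
  have lim: "(\<lambda>n. 49152 / real (n div 5)) \<longlonglongrightarrow> (0::real)"
  proof (rule tendsto_divide_0[OF tendsto_const])
    have "filterlim (\<lambda>n::nat. n div 5) at_top at_top" by (rule filterlim_at_top_div_const_nat) simp
    then have "filterlim (\<lambda>n::nat. real (n div 5)) at_top at_top"
      by (rule filterlim_compose[OF filterlim_real_sequentially])
    then show "filterlim (\<lambda>n::nat. real (n div 5)) at_infinity sequentially"
      by (rule filterlim_at_top_imp_at_infinity)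
  qed
  have "(\<lambda>n. real (u n) / real (f n)) \<longlonglongrightarrow> 0"
  proof (rule tendsto_sandwich[OF _ _ tendsto_const lim])
    show "\<forall>\<^sub>F n in sequentially. 0 \<le> real (u n) / real (f n)" by simp
    show "\<forall>\<^sub>F n in sequentially. real (u n) / real (f n) \<le> 49152 / real (n div 5)"
      using bound eventually_sequentially by blast
  qed
  then show ?thesis unfolding u_def f_def .
qed

end
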